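(* Let $\alpha\in(0,1)$, $T>0$ and $f\in C^{2}[0,T]$. For $n\in\mathbb{N}$ put $\tau=T/n$ and $t_k=k\tau$ for $k=0,1,\dots,n$, and set $b_j^{\alpha}=(j+1)^{\alpha}-j^{\alpha}$ for $j=0,1,\dots,n$. Define $R_{k,\alpha}$ for $k=1,\dots,n$ by \[ {}_{0}^{\mathrm{AB}}\mathcal{I}_t^{\alpha}f(t_k)=\frac{1-\alpha}{B(\alpha)}f(t_k)+\frac{\alpha\,\tau^{\alpha}}{B(\alpha)\Gamma(\alpha+1)}\sum_{j=0}^{k-1}b_j^{\alpha}\,\frac{f(t_{k-j})+f(t_{k-j-1})}{2}+R_{k,\alpha}. \] Then there is a constant $K$ (independent of $n$ and $k$) such that $|R_{k,\alpha}|\le K\,t_k^{\alpha}\,\tau$ for all $n\in\mathbb{N}$ and all $k=1,2,\dots,n$.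
   Context: $\Gamma$ is the Gamma function and $B(\alpha)=1-\alpha+\frac{\alpha}{\Gamma(\alpha)}$. The Atangana-Baleanu fractional integral of order $\alpha\in(0,1)$ with base point $0$ of a function $u$ is \[ {}_{0}^{\mathrm{AB}}\mathcal{I}_t^{\alpha}u(t)=\frac{1-\alpha}{B(\alpha)}u(t)+\frac{\alpha}{B(\alpha)\Gamma(\alpha)}\int_0^t u(s)(t-s)^{\alpha-1}\,ds . \] *)

theory Defs
  imports "HOL-Analysis.Analysis"
begin

definition AB_B :: "real \<Rightarrow> real" where
  "AB_B \<alpha> = 1 - \<alpha> + \<alpha> / Gamma \<alpha>"

definition AB_integral :: "real \<Rightarrow> (real \<Rightarrow> real) \<Rightarrow> real \<Rightarrow> real" where
  "AB_integral \<alpha> u t =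
     (1 - \<alpha>) / AB_B \<alpha> * u t
     + \<alpha> / (AB_B \<alpha> * Gamma \<alpha>) * integral {0..t} (\<lambda>s. u s * (t - s) powr (\<alpha> - 1))"

definition C2_on :: "(real \<Rightarrow> real) \<Rightarrow> real set \<Rightarrow> bool" where
  "C2_on f S \<longleftrightarrow> (\<exists>f' f''.
      (\<forall>x\<in>S. (f has_real_derivative f' x) (at x within S)) \<and>
      (\<forall>x\<in>S. (f' has_real_derivative f'' x) (at x within S)) \<and>
      continuous_on S f'')"

definition AB_trap_remainder :: "real \<Rightarrow> real \<Rightarrow> (real \<Rightarrow> real) \<Rightarrow> nat \<Rightarrow> nat \<Rightarrow> real" where
  "AB_trap_remainder \<alpha> T f n k =
     (let \<tau> = T / real n; t = (\<lambda>i::nat. real i * \<tau>);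
          b = (\<lambda>j::nat. (real j + 1) powr \<alpha> - real j powr \<alpha>)
      in AB_integral \<alpha> f (t k)
         - ((1 - \<alpha>) / AB_B \<alpha> * f (t k)
            + \<alpha> * \<tau> powr \<alpha> / (AB_B \<alpha> * Gamma (\<alpha> + 1))
              * (\<Sum>j=0..k-1. b j * (f (t (k - j)) + f (t (k - j - 1))) / 2)))"

end

theory Submission
  imports Defs
begin

lemma kernel_int:
  fixes \<alpha> t a b :: real
  assumes "0 < \<alpha>" "a \<le> b" "b \<le> t"
  shows "((\<lambda>s. (t - s) powr (\<alpha> - 1)) has_integral ((t - a) powr \<alpha> - (t - b) powr \<alpha>) / \<alpha>) {a..b}"
proof -
  let ?F = "\<lambda>s. - ((t - s) powr \<alpha>) / \<alpha>"
  have "((\<lambda>s. (t - s) powr (\<alpha> - 1)) has_integral (?F b - ?F a)) {a..b}"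
  proof (rule fundamental_theorem_of_calculus_interior)
    show "a \<le> b" by fact
    show "continuous_on {a..b} ?F"
      using assms by (intro continuous_intros continuous_on_powr') auto
    fix x assume x: "x \<in> {a<..<b}"
    then have "t - x > 0" using assms by auto
    have "(?F has_real_derivative (t - x) powr (\<alpha> - 1)) (at x)"
      using \<open>t - x > 0\<close> assms
      by (auto intro!: derivative_eq_intros simp: field_simps)
    then show "(?F has_vector_derivative (t - x) powr (\<alpha> - 1)) (at x)"
      by (simp add: has_real_derivative_iff_has_vector_derivative)
  qed
  then show ?thesis by (simp add: diff_divide_distrib)
qed

lemma piece:
  fixes \<alpha> t a b L :: real and f :: "real \<Rightarrow> real"
  assumes "0 < \<alpha>" "a \<le> b" "b \<le> t" "0 \<le> L"
    and lip: "\<And>x y. x \<in> {a..b} \<Longrightarrow> y \<in> {a..b} \<Longrightarrow> \<bar>f x - f y\<bar> \<le> L * \<bar>x - y\<bar>"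
    and int: "(\<lambda>s. f s * (t - s) powr (\<alpha> - 1)) integrable_on {a..b}"
  shows "\<bar>\<alpha> * integral {a..b} (\<lambda>s. f s * (t - s) powr (\<alpha> - 1))
           - ((t - a) powr \<alpha> - (t - b) powr \<alpha>) * ((f a + f b) / 2)\<bar>
         \<le> L * (b - a) * ((t - a) powr \<alpha> - (t - b) powr \<alpha>)"
proof -
  define c where "c = (f a + f b) / 2"
  define H where "H = ((t - a) powr \<alpha> - (t - b) powr \<alpha>) / \<alpha>"
  define h where "h = (\<lambda>s. (t - s) powr (\<alpha> - 1))"
  have hI: "(h has_integral H) {a..b}" unfolding h_def H_def using kernel_int assms by blast
  have int': "(\<lambda>s. f s * h s) integrable_on {a..b}" using int unfolding h_def .
  have ch: "((\<lambda>s. c * h s) has_integral c * H) {a..b}"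
    using has_integral_mult_right[OF hI] by simp
  have Lh: "((\<lambda>s. (L * (b - a)) * h s) has_integral (L * (b - a)) * H) {a..b}"
    using has_integral_mult_right[OF hI] by simp
  have d: "((\<lambda>s. f s * h s - c * h s) has_integral integral {a..b} (\<lambda>s. f s * h s) - c * H) {a..b}"
    using has_integral_diff[OF integrable_integral[OF int'] ch] .
  have "norm (integral {a..b} (\<lambda>s. f s * h s - c * h s)) \<le> integral {a..b} (\<lambda>s. (L * (b - a)) * h s)"
  proof (rule integral_norm_bound_integral)
    show "(\<lambda>s. f s * h s - c * h s) integrable_on {a..b}" using d by blast
    show "(\<lambda>s. (L * (b - a)) * h s) integrable_on {a..b}" using Lh by blast
    fix s assume s: "s \<in> {a..b}"
    have h0: "0 \<le> h s" unfolding h_def by simp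
    have "\<bar>f s - f a\<bar> \<le> L * (b - a)"
    proof -
      have "\<bar>f s - f a\<bar> \<le> L * \<bar>s - a\<bar>" using lip[of s a] s assms by auto
      also have "\<dots> \<le> L * (b - a)" using s assms by (intro mult_left_mono) auto
      finally show ?thesis .
    qed
    moreover have "\<bar>f s - f b\<bar> \<le> L * (b - a)"
    proof -
      have "\<bar>f s - f b\<bar> \<le> L * \<bar>s - b\<bar>" using lip[of s b] s assms by auto
      also have "\<dots> \<le> L * (b - a)" using s assms by (intro mult_left_mono) auto
      finally show ?thesis .
    qed
    ultimately have "\<bar>f s - c\<bar> \<le> L * (b - a)" unfolding c_def abs_le_iff by (auto simp: field_simps)
    then have "\<bar>f s - c\<bar> * h s \<le> L * (b - a) * h s" using h0 by (rule mult_right_mono)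
    then show "norm (f s * h s - c * h s) \<le> L * (b - a) * h s"
      using h0 by (simp add: abs_mult left_diff_distrib[symmetric])
  qed
  then have "\<bar>integral {a..b} (\<lambda>s. f s * h s) - c * H\<bar> \<le> L * (b - a) * H"
    using integral_unique[OF d] integral_unique[OF Lh] integral_unique[OF hI] by simp
  then have "\<alpha> * \<bar>integral {a..b} (\<lambda>s. f s * h s) - c * H\<bar> \<le> \<alpha> * (L * (b - a) * H)"
    using assms by (intro mult_left_mono) auto
  moreover have "\<alpha> * \<bar>integral {a..b} (\<lambda>s. f s * h s) - c * H\<bar> =
     \<bar>\<alpha> * integral {a..b} (\<lambda>s. f s * h s) - ((t - a) powr \<alpha> - (t - b) powr \<alpha>) * c\<bar>"
    using assms unfolding H_def by (simp add: abs_mult field_simps)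
  moreover have "\<alpha> * (L * (b - a) * H) = L * (b - a) * ((t - a) powr \<alpha> - (t - b) powr \<alpha>)"
    using assms unfolding H_def by (simp add: field_simps)
  ultimately show ?thesis unfolding c_def h_def by simp
qed

lemma induct_step:
  fixes \<alpha> \<tau> L :: real and f :: "real \<Rightarrow> real" and k :: nat
  assumes a0: "0 < \<alpha>" and tau: "0 < \<tau>" and L0: "0 \<le> L"
    and lip: "\<And>x y. x \<in> {0..real k * \<tau>} \<Longrightarrow> y \<in> {0..real k * \<tau>} \<Longrightarrow> \<bar>f x - f y\<bar> \<le> L * \<bar>x - y\<bar>"
    and int: "(\<lambda>s. f s * (real k * \<tau> - s) powr (\<alpha> - 1)) integrable_on {0..real k * \<tau>}"
  shows "m \<le> k \<Longrightarrow> \<exists>I. ((\<lambda>s. f s * (real k * \<tau> - s) powr (\<alpha> - 1)) has_integral I) {real (k - m) * \<tau> .. real k * \<tau>}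
      \<and> \<bar>\<alpha> * I - \<tau> powr \<alpha> * (\<Sum>j<m. ((real j + 1) powr \<alpha> - real j powr \<alpha>) *
             (f (real (k - j) * \<tau>) + f (real (k - j - 1) * \<tau>)) / 2)\<bar>
         \<le> L * \<tau> * (real m * \<tau>) powr \<alpha>"
proof (induction m)
  case 0
  show ?case
    by (rule exI[of _ 0]) (auto intro: has_integral_refl)
next
  case (Suc m)
  then obtain I where I: "((\<lambda>s. f s * (real k * \<tau> - s) powr (\<alpha> - 1)) has_integral I) {real (k - m) * \<tau> .. real k * \<tau>}"
    and Ib: "\<bar>\<alpha> * I - \<tau> powr \<alpha> * (\<Sum>j<m. ((real j + 1) powr \<alpha> - real j powr \<alpha>) *
             (f (real (k - j) * \<tau>) + f (real (k - j - 1) * \<tau>)) / 2)\<bar>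
         \<le> L * \<tau> * (real m * \<tau>) powr \<alpha>" by auto
  define a where "a = real (k - Suc m) * \<tau>"
  define b where "b = real (k - m) * \<tau>"
  define t where "t = real k * \<tau>"
  have ra: "real (k - Suc m) = real k - real m - 1" using Suc.prems by (simp add: of_nat_diff)
  have rb: "real (k - m) = real k - real m" using Suc.prems by (simp add: of_nat_diff)
  have mk: "(real m + 1) * \<tau> \<le> real k * \<tau>" using Suc.prems tau by (intro mult_right_mono) auto
  have ab: "a \<le> b" "b \<le> t" "0 \<le> a" and bma: "b - a = \<tau>"
    and ta: "t - a = (real m + 1) * \<tau>" and tb: "t - b = real m * \<tau>"
    unfolding a_def b_def t_def ra rb using tau Suc.prems mk by (auto simp: field_simps)
  have intab: "(\<lambda>s. f s * (t - s) powr (\<alpha> - 1)) integrable_on {a..b}"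
    using ab unfolding t_def by (intro integrable_on_subinterval[OF int]) auto
  have P: "\<bar>\<alpha> * integral {a..b} (\<lambda>s. f s * (t - s) powr (\<alpha> - 1))
           - ((t - a) powr \<alpha> - (t - b) powr \<alpha>) * ((f a + f b) / 2)\<bar>
         \<le> L * (b - a) * ((t - a) powr \<alpha> - (t - b) powr \<alpha>)"
    by (rule piece[OF a0 ab(1,2) L0 _ intab]) (rule lip, use ab in \<open>auto simp: t_def\<close>)
  have pw: "(t - a) powr \<alpha> - (t - b) powr \<alpha> = \<tau> powr \<alpha> * ((real m + 1) powr \<alpha> - real m powr \<alpha>)"
    unfolding ta tb using tau by (simp add: powr_mult right_diff_distrib mult.commute)
  have fa: "f (real (k - m - 1) * \<tau>) = f a" unfolding a_def by simp
  have fb: "f (real (k - m) * \<tau>) = f b" unfolding b_def by simp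
  define J where "J = integral {a..b} (\<lambda>s. f s * (t - s) powr (\<alpha> - 1))"
  have JI: "((\<lambda>s. f s * (t - s) powr (\<alpha> - 1)) has_integral J) {a..b}"
    unfolding J_def using intab by blast
  have comb: "((\<lambda>s. f s * (t - s) powr (\<alpha> - 1)) has_integral (J + I)) {a..t}"
    using has_integral_combine[OF ab(1,2) JI] I unfolding b_def t_def by blast
  have tm: "real (Suc m) * \<tau> = t - a" using ta by simp
  have E: "L * \<tau> * (real m * \<tau>) powr \<alpha> + L * (b - a) * ((t - a) powr \<alpha> - (t - b) powr \<alpha>)
        = L * \<tau> * (real (Suc m) * \<tau>) powr \<alpha>"
    unfolding tm bma by (simp add: tb algebra_simps)
  define S where "S = (\<Sum>j<m. ((real j + 1) powr \<alpha> - real j powr \<alpha>) *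
             (f (real (k - j) * \<tau>) + f (real (k - j - 1) * \<tau>)) / 2)"
  define D where "D = (real m + 1) powr \<alpha> - real m powr \<alpha>"
  have sumS: "(\<Sum>j<Suc m. ((real j + 1) powr \<alpha> - real j powr \<alpha>) *
             (f (real (k - j) * \<tau>) + f (real (k - j - 1) * \<tau>)) / 2) = S + D * (f b + f a) / 2"
    unfolding S_def D_def using fa fb by simp
  have P': "\<bar>\<alpha> * J - \<tau> powr \<alpha> * (D * (f b + f a) / 2)\<bar> \<le> L * (b - a) * ((t - a) powr \<alpha> - (t - b) powr \<alpha>)"
  proof -
    have "\<tau> powr \<alpha> * (D * (f b + f a) / 2) = ((t - a) powr \<alpha> - (t - b) powr \<alpha>) * ((f a + f b) / 2)"
      unfolding pw D_def by (simp add: field_simps)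
    then show ?thesis using P unfolding J_def[symmetric] by simp
  qed
  have Ib': "\<bar>\<alpha> * I - \<tau> powr \<alpha> * S\<bar> \<le> L * \<tau> * (real m * \<tau>) powr \<alpha>"
    using Ib unfolding S_def .
  have "\<alpha> * (J + I) - \<tau> powr \<alpha> * (S + D * (f b + f a) / 2) =
        (\<alpha> * I - \<tau> powr \<alpha> * S) + (\<alpha> * J - \<tau> powr \<alpha> * (D * (f b + f a) / 2))"
    by (simp add: algebra_simps)
  then have X: "\<bar>\<alpha> * (J + I) - \<tau> powr \<alpha> * (S + D * (f b + f a) / 2)\<bar>
        \<le> L * \<tau> * (real m * \<tau>) powr \<alpha> + L * (b - a) * ((t - a) powr \<alpha> - (t - b) powr \<alpha>)"
    using Ib' P' abs_triangle_ineq[of "\<alpha> * I - \<tau> powr \<alpha> * S" "\<alpha> * J - \<tau> powr \<alpha> * (D * (f b + f a) / 2)"]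
    by linarith
  show ?case
  proof (intro exI[of _ "J + I"] conjI)
    show "((\<lambda>s. f s * (real k * \<tau> - s) powr (\<alpha> - 1)) has_integral J + I) {real (k - Suc m) * \<tau>..real k * \<tau>}"
      using comb unfolding a_def t_def .
    show "\<bar>\<alpha> * (J + I) - \<tau> powr \<alpha> * (\<Sum>j<Suc m. ((real j + 1) powr \<alpha> - real j powr \<alpha>) *
             (f (real (k - j) * \<tau>) + f (real (k - j - 1) * \<tau>)) / 2)\<bar>
         \<le> L * \<tau> * (real (Suc m) * \<tau>) powr \<alpha>"
      unfolding sumS using X E by linarith
  qed
qed

theorem mainTheorem1:
  fixes \<alpha> T :: real and f :: "real \<Rightarrow> real"
  assumes "0 < \<alpha>" "\<alpha> < 1" "0 < T" "C2_on f {0..T}"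
  shows "\<exists>K::real. \<forall>n::nat. \<forall>k::nat. 1 \<le> n \<longrightarrow> 1 \<le> k \<longrightarrow> k \<le> n \<longrightarrow>
           \<bar>AB_trap_remainder \<alpha> T f n k\<bar>
             \<le> K * (real k * (T / real n)) powr \<alpha> * (T / real n)"
proof -
  note a0 = assms(1) and a1 = assms(2) and T0 = assms(3)
  obtain f' f'' where d1: "\<And>x. x \<in> {0..T} \<Longrightarrow> (f has_real_derivative f' x) (at x within {0..T})"
    and d2: "\<And>x. x \<in> {0..T} \<Longrightarrow> (f' has_real_derivative f'' x) (at x within {0..T})"
    using assms(4) unfolding C2_on_def by blast
  have cf: "continuous_on {0..T} f"
    using d1 DERIV_continuous continuous_on_eq_continuous_within by blast
  have cf': "continuous_on {0..T} f'"
    using d2 DERIV_continuous continuous_on_eq_continuous_within by blast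
  have "bounded (f' ` {0..T})"
    using compact_continuous_image[OF cf'] compact_imp_bounded by blast
  then obtain L where L0: "L > 0" and Lb: "\<And>x. x \<in> {0..T} \<Longrightarrow> norm (f' x) \<le> L"
    unfolding bounded_pos by auto
  have lip: "\<And>x y. x \<in> {0..T} \<Longrightarrow> y \<in> {0..T} \<Longrightarrow> \<bar>f x - f y\<bar> \<le> L * \<bar>x - y\<bar>"
    using field_differentiable_bound[OF convex_real_interval(5) d1 Lb] by auto
  define B where "B = AB_B \<alpha>"
  have G0: "Gamma \<alpha> > 0" using a0 by simp
  have B0: "B > 0" unfolding B_def AB_B_def using a0 a1 G0 by (simp add: add_pos_nonneg)
  have G1: "Gamma (\<alpha> + 1) = \<alpha> * Gamma \<alpha>"
    using a0 by (intro Gamma_plus1) (auto dest: nonpos_Ints_nonpos)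
  show ?thesis
  proof (intro exI[of _ "L / (B * Gamma \<alpha>)"] allI impI)
    fix n k :: nat
    assume n1: "1 \<le> n" and k1: "1 \<le> k" and kn: "k \<le> n"
    define \<tau> where "\<tau> = T / real n"
    have tau: "\<tau> > 0" unfolding \<tau>_def using n1 T0 by simp
    have tT: "real k * \<tau> \<le> T" unfolding \<tau>_def using kn n1 T0
      by (simp add: field_simps mult_right_mono)
    define t where "t = real k * \<tau>"
    have t0: "0 \<le> t" unfolding t_def using tau by simp
    have hI: "((\<lambda>s. (t - s) powr (\<alpha> - 1)) has_integral ((t - 0) powr \<alpha> - (t - t) powr \<alpha>) / \<alpha>) {0..t}"
      using kernel_int[OF a0 t0 order_refl] by simp
    have habs: "(\<lambda>s. (t - s) powr (\<alpha> - 1)) absolutely_integrable_on {0..t}"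
      using hI by (intro nonnegative_absolutely_integrable_1) auto
    have cft: "continuous_on {0..t} f" using tT unfolding t_def by (intro continuous_on_subset[OF cf]) auto
    have "(\<lambda>s. f s * (t - s) powr (\<alpha> - 1)) absolutely_integrable_on {0..t}"
    proof (rule absolutely_integrable_bounded_measurable_product_real)
      show "f \<in> borel_measurable (lebesgue_on {0..t})"
        using cft by (rule continuous_imp_measurable_on_sets_lebesgue) simp
      show "{0..t} \<in> sets lebesgue" by simp
      show "bounded (f ` {0..t})"
        using compact_continuous_image[OF cft] compact_imp_bounded by blast
    qed (rule habs)
    then have int: "(\<lambda>s. f s * (real k * \<tau> - s) powr (\<alpha> - 1)) integrable_on {0..real k * \<tau>}"
      unfolding t_def absolutely_integrable_on_def by blast
    have lipk: "\<And>x y. x \<in> {0..real k * \<tau>} \<Longrightarrow> y \<in> {0..real k * \<tau>} \<Longrightarrow> \<bar>f x - f y\<bar> \<le> L * \<bar>x - y\<bar>"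
      using lip tT by auto
    obtain I where I: "((\<lambda>s. f s * (real k * \<tau> - s) powr (\<alpha> - 1)) has_integral I) {real (k - k) * \<tau> .. real k * \<tau>}"
      and Ib: "\<bar>\<alpha> * I - \<tau> powr \<alpha> * (\<Sum>j<k. ((real j + 1) powr \<alpha> - real j powr \<alpha>) *
             (f (real (k - j) * \<tau>) + f (real (k - j - 1) * \<tau>)) / 2)\<bar>
         \<le> L * \<tau> * (real k * \<tau>) powr \<alpha>"
      using induct_step[OF a0 tau less_imp_le[OF L0] lipk int, of k] by auto
    have Ieq: "integral {0..real k * \<tau>} (\<lambda>s. f s * (real k * \<tau> - s) powr (\<alpha> - 1)) = I"
      using I by (simp add: integral_unique)
    define S where "S = (\<Sum>j<k. ((real j + 1) powr \<alpha> - real j powr \<alpha>) *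
             (f (real (k - j) * \<tau>) + f (real (k - j - 1) * \<tau>)) / 2)"
    have sumeq: "(\<Sum>j=0..k-1. ((real j + 1) powr \<alpha> - real j powr \<alpha>) *
             (f (real (k - j) * \<tau>) + f (real (k - j - 1) * \<tau>)) / 2) = S"
      unfolding S_def using k1 by (intro sum.cong) auto
    have R: "AB_trap_remainder \<alpha> T f n k = (\<alpha> * I - \<tau> powr \<alpha> * S) / (B * Gamma \<alpha>)"
    proof -
      have Gn: "Gamma \<alpha> \<noteq> 0" using G0 by linarith
      have Bn: "B \<noteq> 0" and an: "\<alpha> \<noteq> 0" using B0 a0 by auto
      show "?thesis"
        unfolding AB_trap_remainder_def AB_integral_def Let_def \<tau>_def[symmetric] sumeq Ieq B_def[symmetric] G1
        using Gn Bn an by (simp add: field_simps)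
    qed
    have "\<bar>AB_trap_remainder \<alpha> T f n k\<bar> = \<bar>\<alpha> * I - \<tau> powr \<alpha> * S\<bar> / (B * Gamma \<alpha>)"
      unfolding R using B0 G0 by simp
    also have "\<dots> \<le> L * \<tau> * (real k * \<tau>) powr \<alpha> / (B * Gamma \<alpha>)"
      using Ib B0 G0 unfolding S_def by (intro divide_right_mono) auto
    also have "\<dots> = L / (B * Gamma \<alpha>) * (real k * \<tau>) powr \<alpha> * \<tau>" by simp
    finally show "\<bar>AB_trap_remainder \<alpha> T f n k\<bar> \<le> L / (B * Gamma \<alpha>) * (real k * (T / real n)) powr \<alpha> * (T / real n)"
      unfolding \<tau>_def .
  qed
qed

end
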